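(* In the setting described in the context, for every $x\in X$ it holds that $|\pi^{-1}(\{\pi(x)\})|\leq m^{2^r}$.
   Context: Let $r\geq 2$, $G=\mathbb Z^r$ with standard basis $e_1,\dots,e_r$. For each $j$, let $(p_j^i)_{i\in\mathbb N}$ be a strictly increasing sequence of positive integers with $p_j^i\mid p_j^{i+1}$ and $p_j^i>2i+1$, and let $\Gamma_i=\langle p_j^ie_j:1\leq j\leq r\rangle$, assumed to satisfy $[\Gamma_i:\Gamma_{i+1}]>1/(1-2^{-(1/2)^{i+1}})$. Let $(D_i)_{i\in\mathbb N}$ be finite subsets of $\mathbb Z^r$ such that: each $D_i$ is a fundamental domain of $\mathbb Z^r/\Gamma_i$ of the form $\{(x_1,\dots,x_r): -q^i_{1,j}\leq x_j<q^i_{2,j},\ 1\le j\le r\}$ with integers $q^i_{1,j},q^i_{2,j}>i$, $q^i_{1,j}+q^i_{2,j}=p^i_j$; $0\in D_i\subseteq D_{i+1}$; $\bigcup_iD_i=\mathbb Z^r$; and $D_i=\bigcup_{\gamma\in D_i\cap\Gamma_{i-1}}(\gamma+D_{i-1})$ for $i\geq2$. Let $m\geq 2$, $\Sigma=\{1,\dots,m\}$, and $\alpha_i\in\Sigma$ the element with $\alpha_i\equiv i\pmod m$. Define $\eta\in\Sigma^{\mathbb Z^r}$: $J(0)=\{0\}$ and $\eta(\gamma)=\alpha_1$ for $\gamma\in\Gamma_1$; for $k\geq1$, $J(k)=D_k\setminus\bigcup_{i=0}^{k-1}(J(i)+\Gamma_{i+1})$ and $\eta(\gamma+h)=\alpha_{k+1}$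 for $h\in J(k)$, $\gamma\in\Gamma_{k+1}$. With the shift $\sigma^g(x)(h)=x(h-g)$, let $X$ be the closure of the $\sigma$-orbit of $\eta$. For $y\in\Sigma^{\mathbb Z^r}$, a subgroup $\Gamma$ and $\alpha\in\Sigma$, let $\mathrm{Per}(y,\Gamma,\alpha)=\{g: y(g-\gamma)=\alpha\ \forall\gamma\in\Gamma\}$, and $C_i=\{y\in X:\mathrm{Per}(y,\Gamma_i,\alpha)=\mathrm{Per}(\eta,\Gamma_i,\alpha)\ \forall\alpha\in\Sigma\}$. The odometer is $\overleftarrow{G}=\{(t_i+\Gamma_i)_i\in\prod_i\mathbb Z^r/\Gamma_i: t_{i+1}+\Gamma_i=t_i+\Gamma_i\}$, and $\pi:X\to\overleftarrow G$ is the factor map (onto the maximal equicontinuous factor) given by $\pi(x)=(t_i+\Gamma_i)_i$ where $\sigma^{t_i}x\in C_i$ for each $i$. *)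

theory Defs
  imports "HOL-Analysis.Analysis"
begin

text \<open>The group G = Z^r is modelled as int^'n with CARD('n) = r.
  Configurations in Sigma^G are functions int^'n => int (product topology from
  HOL-Analysis Function_Topology; int carries the discrete topology).
  Sequences indexed by N = {1,2,...} are modelled as functions on nat, where only
  indices >= 1 are used/constrained.\<close>

definition setplus :: "('a::plus) set \<Rightarrow> 'a set \<Rightarrow> 'a set" where
  "setplus A B = {a + b | a b. a \<in> A \<and> b \<in> B}"

definition Gam :: "('n::finite \<Rightarrow> nat \<Rightarrow> int) \<Rightarrow> nat \<Rightarrow> (int^'n) set" where
  "Gam p i = {g. \<forall>j. p j i dvd g $ j}"

definition subgroup_index :: "(int^'n) set \<Rightarrow> (int^'n) set \<Rightarrow> nat" where
  "subgroup_index H K = card ((\<lambda>g. setplus {g} K) ` H)"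

definition alpha :: "nat \<Rightarrow> nat \<Rightarrow> int" where
  "alpha m i = (int i - 1) mod int m + 1"

text \<open>JU p D k = union over i<k of (J(i) + Gamma_(i+1)); J is defined from it.\<close>
primrec JU :: "('n::finite \<Rightarrow> nat \<Rightarrow> int) \<Rightarrow> (nat \<Rightarrow> (int^'n) set) \<Rightarrow> nat \<Rightarrow> (int^'n) set" where
  "JU p D 0 = {}"
| "JU p D (Suc k) = JU p D k \<union>
     setplus (if k = 0 then {0} else D k - JU p D k) (Gam p (Suc k))"

definition J :: "('n::finite \<Rightarrow> nat \<Rightarrow> int) \<Rightarrow> (nat \<Rightarrow> (int^'n) set) \<Rightarrow> nat \<Rightarrow> (int^'n) set" where
  "J p D k = (if k = 0 then {0} else D k - JU p D k)"

text \<open>eta(gamma + h) = alpha_(k+1) for h in J(k), gamma in Gamma_(k+1).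
  (These sets are pairwise disjoint, so the least such k is the unique one.)\<close>
definition eta :: "('n::finite \<Rightarrow> nat \<Rightarrow> int) \<Rightarrow> (nat \<Rightarrow> (int^'n) set) \<Rightarrow> nat \<Rightarrow> (int^'n \<Rightarrow> int)" where
  "eta p D m = (\<lambda>g. alpha m (Suc (LEAST k. g \<in> setplus (J p D k) (Gam p (Suc k)))))"

definition shift :: "int^'n \<Rightarrow> (int^'n \<Rightarrow> int) \<Rightarrow> (int^'n \<Rightarrow> int)" where
  "shift g x = (\<lambda>h. x (h - g))"

definition Xs :: "('n::finite \<Rightarrow> nat \<Rightarrow> int) \<Rightarrow> (nat \<Rightarrow> (int^'n) set) \<Rightarrow> nat \<Rightarrow> (int^'n \<Rightarrow> int) set" where
  "Xs p D m = closure (range (\<lambda>g. shift g (eta p D m)))"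

definition Per :: "(int^'n \<Rightarrow> int) \<Rightarrow> (int^'n) set \<Rightarrow> int \<Rightarrow> (int^'n) set" where
  "Per y \<Gamma> a = {g. \<forall>\<gamma>\<in>\<Gamma>. y (g - \<gamma>) = a}"

definition Cs :: "('n::finite \<Rightarrow> nat \<Rightarrow> int) \<Rightarrow> (nat \<Rightarrow> (int^'n) set) \<Rightarrow> nat \<Rightarrow> nat \<Rightarrow> (int^'n \<Rightarrow> int) set" where
  "Cs p D m i = {y \<in> Xs p D m. \<forall>a \<in> {1..int m}.
      Per y (Gam p i) a = Per (eta p D m) (Gam p i) a}"

text \<open>pi x = (t_i + Gamma_i)_(i>=1) with shift t_i x in C_i; index 0 is a dummy.\<close>
definition piX :: "('n::finite \<Rightarrow> nat \<Rightarrow> int) \<Rightarrow> (nat \<Rightarrow> (int^'n) set) \<Rightarrow> nat \<Rightarrow> (int^'n \<Rightarrow> int) \<Rightarrow> nat \<Rightarrow> (int^'n) set" where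
  "piX p D m x = (\<lambda>i. if i = 0 then {} else
      setplus {SOME t. shift t x \<in> Cs p D m i} (Gam p i))"

end

theory Submission
  imports Defs
begin


lemma open_int_singleton: "open {x::int}"
  by (rule open_discrete)

lemma setplus_iff: "a \<in> setplus A B \<longleftrightarrow> (\<exists>x\<in>A. \<exists>y\<in>B. a = x + y)"
  by (auto simp: setplus_def)

lemma Gam_iff: "g \<in> Gam p i \<longleftrightarrow> (\<forall>j. p j i dvd g $ j)"
  by (simp add: Gam_def)

lemma Gam_0[simp]: "0 \<in> Gam p i" by (simp add: Gam_def)
lemma Gam_add: "a \<in> Gam p i \<Longrightarrow> b \<in> Gam p i \<Longrightarrow> a + b \<in> Gam p i"
  by (simp add: Gam_def)
lemma Gam_uminus: "a \<in> Gam p i \<Longrightarrow> - a \<in> Gam p i"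
  by (simp add: Gam_def)
lemma Gam_diff: "a \<in> Gam p i \<Longrightarrow> b \<in> Gam p i \<Longrightarrow> a - b \<in> Gam p i"
  by (simp add: Gam_def dvd_diff)

lemma Per_iff: "g \<in> Per y G a \<longleftrightarrow> (\<forall>\<gamma>\<in>G. y (g - \<gamma>) = a)"
  by (simp add: Per_def)

lemma Per_Gam_shift:
  assumes "g \<in> Per y (Gam p i) a" "v \<in> Gam p i" shows "g + v \<in> Per y (Gam p i) a"
proof -
  have "y (g + v - \<gamma>) = a" if "\<gamma> \<in> Gam p i" for \<gamma>
  proof -
    have "\<gamma> - v \<in> Gam p i" using that assms(2) by (rule Gam_diff)
    then have "y (g - (\<gamma> - v)) = a" using assms(1) by (simp add: Per_iff)
    then show ?thesis by (simp add: algebra_simps)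
  qed
  then show ?thesis by (simp add: Per_iff)
qed

lemma shift_apply: "shift t y h = y (h - t)" by (simp add: shift_def)

lemma Per_shift: "g \<in> Per (shift t y) G a \<longleftrightarrow> g - t \<in> Per y G a"
  by (simp add: Per_iff shift_def algebra_simps)

lemma alpha_range: "m \<ge> 1 \<Longrightarrow> alpha m i \<in> {1..int m}"
proof -
  assume "m \<ge> 1"
  then have "(int i - 1) mod int m < int m" "0 \<le> (int i - 1) mod int m" by simp_all
  then show ?thesis by (simp add: alpha_def)
qed

lemma alpha_neq: "m \<ge> 2 \<Longrightarrow> alpha m (Suc N) \<noteq> alpha m (Suc (Suc N))"
proof
  assume m: "m \<ge> 2" and e: "alpha m (Suc N) = alpha m (Suc (Suc N))"
  then have "int N mod int m = (1 + int N) mod int m" by (simp add: alpha_def)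
  then have "int m dvd (1 + int N) - int N"
    by (metis mod_eq_dvd_iff)
  then have "int m dvd 1" by simp
  then show False using m by simp
qed



lemma JU_Suc_J: "JU p D (Suc k) = JU p D k \<union> setplus (J p D k) (Gam p (Suc k))"
  by (simp add: J_def)

lemma JU_0[simp]: "JU p D 0 = {}" by simp

declare JU.simps[simp del]

lemma JU_Suc_iff: "g \<in> JU p D (Suc k) \<longleftrightarrow> (\<exists>i\<le>k. g \<in> setplus (J p D i) (Gam p (Suc i)))"

proof (induction k)
  case 0 then show ?case by (simp add: JU_Suc_J)
next
  case (Suc k)
  show ?case
    unfolding JU_Suc_J[of p D "Suc k"] using Suc by (auto simp del: JU.simps simp: le_Suc_eq)
qed

lemma Least_cum: "(LEAST k::nat. P k) = (LEAST k. \<exists>i\<le>k. P i)"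
proof (cases "\<exists>k. P k")
  case True
  then obtain k where "P k" by blast
  show ?thesis
  proof (rule sym, rule Least_equality)
    show "\<exists>i\<le>(LEAST k. P k). P i"
      using LeastI[of P k, OF \<open>P k\<close>] by blast
    fix y assume "\<exists>i\<le>y. P i"
    then obtain i where "i \<le> y" "P i" by blast
    then show "(LEAST k. P k) \<le> y" using Least_le[of P i] by linarith
  qed
next
  case False
  then have "\<And>k. P k = False" "\<And>k. (\<exists>i\<le>k. P i) = False" by auto
  then show ?thesis by (simp only:)
qed

lemma eta_alt: "eta p D m g = alpha m (Suc (LEAST k. g \<in> JU p D (Suc k)))"
  by (simp only: eta_def JU_Suc_iff Least_cum[symmetric])

lemma eta_eq: "(\<And>k. b \<in> JU p D k \<longleftrightarrow> b' \<in> JU p D k) \<Longrightarrow> eta p D m b = eta p D m b'"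
proof -
  assume "\<And>k. b \<in> JU p D k \<longleftrightarrow> b' \<in> JU p D k"
  then have "\<forall>k. (b \<in> JU p D (Suc k)) = (b' \<in> JU p D (Suc k))" by blast
  then show ?thesis by (simp add: eta_alt)
qed

lemma JU_mono: "k \<le> k' \<Longrightarrow> JU p D k \<subseteq> JU p D k'"
proof (induction k' rule: dec_induct)
  case base then show ?case by simp
next
  case (step n)
  have "JU p D n \<subseteq> JU p D (Suc n)" unfolding JU_Suc_J by blast
  then show ?case using step by blast
qed

lemma JU_Suc: "k \<ge> 1 \<Longrightarrow> JU p D (Suc k) = JU p D k \<union> setplus (D k - JU p D k) (Gam p (Suc k))"
  by (simp add: JU.simps)

lemma eta_range: "m \<ge> 1 \<Longrightarrow> eta p D m g \<in> {1..int m}"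
  unfolding eta_def by (rule alpha_range)

locale toep =
  fixes p :: "'n::finite \<Rightarrow> nat \<Rightarrow> int" and D :: "nat \<Rightarrow> (int^'n) set" and m :: nat
  assumes p_prop: "\<forall>j i. i \<ge> 1 \<longrightarrow> 0 < p j i \<and> p j i < p j (Suc i) \<and> p j i dvd p j (Suc i)
                   \<and> p j i > 2 * int i + 1"
    and D_box: "\<forall>i\<ge>1. \<exists>q1 q2 :: 'n \<Rightarrow> int. (\<forall>j. q1 j > int i \<and> q2 j > int i \<and> q1 j + q2 j = p j i)
                   \<and> D i = {v. \<forall>j. - q1 j \<le> v $ j \<and> v $ j < q2 j}"
    and D_fund: "\<forall>i\<ge>1. \<forall>g. \<exists>!d. d \<in> D i \<and> g - d \<in> Gam p i"
    and D_mono: "\<forall>i\<ge>1. 0 \<in> D i \<and> D i \<subseteq> D (Suc i)"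
    and D_union: "(\<Union>i\<in>{1..}. D i) = UNIV"
    and D_rec: "\<forall>i\<ge>2. D i = (\<Union>\<gamma>\<in>D i \<inter> Gam p (i - 1). (\<lambda>d. \<gamma> + d) ` D (i - 1))"
    and m2: "m \<ge> 2"
begin

abbreviation "G \<equiv> Gam p"
abbreviation "U \<equiv> JU p D"
abbreviation "et \<equiv> eta p D m"

lemma Gam_mono1: "i \<ge> 1 \<Longrightarrow> G (Suc i) \<subseteq> G i"
  using p_prop by (auto simp: Gam_def intro: dvd_trans)

lemma Gam_mono: assumes "1 \<le> N" "N \<le> K" shows "G K \<subseteq> G N"
  using assms(2)
proof (induction K rule: dec_induct)
  case base then show ?case by simp
next
  case (step n) then show ?case using Gam_mono1[of n] assms(1) by auto
qed

lemma rep_ex: "i \<ge> 1 \<Longrightarrow> \<exists>d\<in>D i. g - d \<in> G i"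
  using D_fund by blast

lemma FD_uniq: "i \<ge> 1 \<Longrightarrow> d \<in> D i \<Longrightarrow> d' \<in> D i \<Longrightarrow> d - d' \<in> G i \<Longrightarrow> d = d'"
proof -
  assume i: "i \<ge> 1" and d: "d \<in> D i" "d' \<in> D i" "d - d' \<in> G i"
  from D_fund i have "\<exists>!e. e \<in> D i \<and> d - e \<in> G i" by blast
  moreover have "d \<in> D i \<and> d - d \<in> G i" using d by simp
  ultimately show ?thesis using d by blast
qed

lemma D_fin: "i \<ge> 1 \<Longrightarrow> finite (D i)"
proof -
  assume "i \<ge> 1"
  then obtain q1 q2 :: "'n \<Rightarrow> int" where Di: "D i = {v. \<forall>j. - q1 j \<le> v $ j \<and> v $ j < q2 j}"
    using D_box by blast
  have "(\<lambda>v. vec_nth v) ` D i \<subseteq> PiE UNIV (\<lambda>j. {- q1 j..<q2 j})"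
    by (auto simp: Di PiE_def extensional_def)
  moreover have "finite (PiE UNIV (\<lambda>j. {- q1 j..<q2 j}))"
    by (rule finite_PiE) auto
  ultimately have "finite ((\<lambda>v. vec_nth v) ` D i)" by (rule finite_subset)
  moreover have "inj_on vec_nth (D i)" by (simp add: inj_on_def vec_eq_iff)
  ultimately show ?thesis using finite_imageD by blast
qed

lemma JU_per: "k \<ge> 1 \<Longrightarrow> \<gamma> \<in> G k \<Longrightarrow> g \<in> U k \<Longrightarrow> g + \<gamma> \<in> U k"
proof (induction k arbitrary: g \<gamma> rule: dec_induct)
  case base
  then have "U 1 = G 1" by (auto simp: setplus_iff JU.simps)
  then show ?case using base by (simp add: Gam_add)
next
  case (step k)
  have \<gamma>k: "\<gamma> \<in> G k" using step Gam_mono1[of k] by auto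
  show ?case
  proof (cases "g \<in> U k")
    case True then show ?thesis using step(3)[OF \<gamma>k True] by (simp add: JU_Suc[OF step(1)])
  next
    case False
    then obtain x y where "x \<in> D k - U k" "y \<in> G (Suc k)" "g = x + y"
      using step(5) by (auto simp: JU_Suc[OF step(1)] setplus_iff)
    then have "g + \<gamma> = x + (y + \<gamma>)" "y + \<gamma> \<in> G (Suc k)"
      using step(4) by (auto simp: Gam_add algebra_simps)
    then have "g + \<gamma> \<in> setplus (D k - U k) (G (Suc k))"
      using \<open>x \<in> D k - U k\<close> unfolding setplus_iff by blast
    then show ?thesis by (simp add: JU_Suc[OF step(1)])
  qed
qed

lemma JU_per_iff: "1 \<le> k \<Longrightarrow> k \<le> K \<Longrightarrow> \<gamma> \<in> G K \<Longrightarrow> (g + \<gamma> \<in> U k \<longleftrightarrow> g \<in> U k)"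
proof -
  assume a: "1 \<le> k" "k \<le> K" "\<gamma> \<in> G K"
  then have \<gamma>: "\<gamma> \<in> G k" using Gam_mono by blast
  show ?thesis
  proof
    assume "g + \<gamma> \<in> U k"
    from JU_per[OF a(1) Gam_uminus[OF \<gamma>] this] show "g \<in> U k" by simp
  qed (rule JU_per[OF a(1) \<gamma>])
qed

lemma D_sub_JU: "k \<ge> 1 \<Longrightarrow> D k \<subseteq> U (Suc k)"
proof
  fix g assume k: "k \<ge> 1" and g: "g \<in> D k"
  show "g \<in> U (Suc k)"
  proof (cases "g \<in> U k")
    case False
    then have "g \<in> setplus (D k - U k) (G (Suc k))" using g
      unfolding setplus_iff by (metis Diff_iff Gam_0 add.right_neutral)
    then show ?thesis using k by (simp add: JU_Suc)
  qed (use k in \<open>simp add: JU_Suc\<close>)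
qed

lemma cover: "\<exists>K\<ge>1. b \<in> U K"
proof -
  from D_union obtain i where "i \<ge> 1" "b \<in> D i" by auto
  then show ?thesis using D_sub_JU[of i] by (intro exI[of _ "Suc i"]) auto
qed

lemma eta_level: "K \<ge> 1 \<Longrightarrow> e \<in> D K \<Longrightarrow> e \<notin> U K \<Longrightarrow> et e = alpha m (Suc K)"
proof -
  assume K: "K \<ge> 1" and e: "e \<in> D K" "e \<notin> U K"
  have "(LEAST k. e \<in> U (Suc k)) = K"
  proof (rule Least_equality)
    show "e \<in> U (Suc K)" using D_sub_JU[OF K] e by auto
    show "\<And>y. e \<in> U (Suc y) \<Longrightarrow> K \<le> y"
      using JU_mono e(2) by (metis Suc_leI not_le subsetD)
  qed
  then show ?thesis by (simp add: eta_alt)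
qed

lemma eta_per: "N \<ge> 1 \<Longrightarrow> g \<in> U N \<Longrightarrow> \<gamma> \<in> G N \<Longrightarrow> et (g + \<gamma>) = et g"
proof (rule eta_eq)
  fix k assume N: "N \<ge> 1" and g: "g \<in> U N" and \<gamma>: "\<gamma> \<in> G N"
  show "g + \<gamma> \<in> U k \<longleftrightarrow> g \<in> U k"
  proof (cases "k \<le> N")
    case True
    show ?thesis
    proof (cases "k = 0")
      case False then show ?thesis using JU_per_iff[of k N \<gamma> g] True \<gamma> by simp
    qed simp
  next
    case False
    then have "U N \<subseteq> U k" by (simp add: JU_mono)
    moreover have "g + \<gamma> \<in> U N" using JU_per[OF N \<gamma> g] .
    ultimately show ?thesis using g by auto
  qed
qed

lemma eta_per_gen: "N \<ge> 1 \<Longrightarrow> \<exists>K\<ge>N. \<forall>\<gamma>\<in>G K. et (b + \<gamma>) = et b"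
proof -
  assume N: "N \<ge> 1"
  obtain K where K: "K \<ge> 1" "b \<in> U K" using cover by blast
  have "b \<in> U (max K N)" using K JU_mono[of K "max K N"] by auto
  then show ?thesis using eta_per[of "max K N" b] N
    by (intro exI[of _ "max K N"]) auto
qed

end


context toep begin

lemma U1: "U 1 = G 1"
  by (auto simp: JU.simps setplus_iff)

lemma Dtile:
  assumes "1 \<le> N" "N \<le> k"
  shows "d \<in> D k \<Longrightarrow> \<gamma>0 \<in> G N \<Longrightarrow> d - \<gamma>0 \<in> D N \<Longrightarrow> b - \<gamma>0 \<in> D N \<Longrightarrow> b \<in> D k"
  using assms(2)
proof (induction k arbitrary: d b \<gamma>0 rule: dec_induct)
  case base
  have "d - (d - \<gamma>0) \<in> G N" using base by simp
  then have "d = d - \<gamma>0" using FD_uniq[OF assms(1)] base by blast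
  then have "\<gamma>0 = 0" by simp
  then show ?case using base by simp
next
  case (step k)
  have k1: "k \<ge> 1" using step assms(1) by simp
  have rec: "D (Suc k) = (\<Union>\<gamma>\<in>D (Suc k) \<inter> G k. (\<lambda>d. \<gamma> + d) ` D k)"
    using D_rec k1 by (metis Suc_1 Suc_le_mono diff_Suc_1)
  from step(4) rec obtain \<gamma> d' where g: "\<gamma> \<in> D (Suc k)" "\<gamma> \<in> G k" "d' \<in> D k" "d = \<gamma> + d'"
    by blast
  have "\<gamma> \<in> G N" using g(2) Gam_mono[OF assms(1) step(1)] by blast
  then have "\<gamma>0 - \<gamma> \<in> G N" using step(5) by (simp add: Gam_diff)
  moreover have "d' - (\<gamma>0 - \<gamma>) \<in> D N" "(b - \<gamma>) - (\<gamma>0 - \<gamma>) \<in> D N"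
    using step(6,7) g(4) by (simp_all add: algebra_simps)
  ultimately have "b - \<gamma> \<in> D k" using step(3)[OF g(3)] by blast
  then have "\<gamma> + (b - \<gamma>) \<in> D (Suc k)" using rec g by blast
  then show ?case by simp
qed

lemma TileJU1:
  assumes N: "1 \<le> N"
  shows "\<forall>a b \<gamma>0. \<gamma>0 \<in> G N \<and> a - \<gamma>0 \<in> D N \<and> b - \<gamma>0 \<in> D N \<and> a \<notin> U N \<and> b \<notin> U N
           \<longrightarrow> a \<in> U k \<longrightarrow> b \<in> U k"
proof (induction k)
  case 0 then show ?case by simp
next
  case (Suc k)
  show ?case
  proof (intro allI impI)
    fix a b \<gamma>0
    assume h: "\<gamma>0 \<in> G N \<and> a - \<gamma>0 \<in> D N \<and> b - \<gamma>0 \<in> D N \<and> a \<notin> U N \<and> b \<notin> U N"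
      and a: "a \<in> U (Suc k)"
    show "b \<in> U (Suc k)"
    proof (cases "Suc k \<le> N")
      case True
      then have "U (Suc k) \<subseteq> U N" by (rule JU_mono)
      then show ?thesis using a h by blast
    next
      case False
      then have Nk: "N \<le> k" and k1: "k \<ge> 1" using N by auto
      show ?thesis
      proof (cases "a \<in> U k")
        case True
        then have "b \<in> U k" using Suc h by blast
        then show ?thesis using JU_mono[of k "Suc k"] by auto
      next
        case False
        with a obtain d \<gamma> where dg: "d \<in> D k" "d \<notin> U k" "\<gamma> \<in> G (Suc k)" "a = d + \<gamma>"
          by (auto simp: JU_Suc[OF k1] setplus_iff)
        have \<gamma>N: "\<gamma> \<in> G N" using dg(3) Gam_mono[OF N, of "Suc k"] Nk by auto
        have g0: "\<gamma>0 - \<gamma> \<in> G N" using h \<gamma>N by (simp add: Gam_diff)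
        have e1: "d - (\<gamma>0 - \<gamma>) \<in> D N" "(b - \<gamma>) - (\<gamma>0 - \<gamma>) \<in> D N"
          using h dg(4) by (simp_all add: algebra_simps)
        have "Suc k \<ge> N" using Nk by simp
        have mg: "- \<gamma> \<in> G (Suc k)" using dg(3) by (rule Gam_uminus)
        have "d \<notin> U N" using h JU_per_iff[OF N \<open>Suc k \<ge> N\<close> mg, of a] dg(4) by simp
        moreover have "b - \<gamma> \<notin> U N" using h JU_per_iff[OF N \<open>Suc k \<ge> N\<close> mg, of b] by simp
        ultimately have "b - \<gamma> \<notin> U k"
          using Suc[rule_format, of "\<gamma>0 - \<gamma>" "b - \<gamma>" d] g0 e1 dg(2) by blast
        moreover have "b - \<gamma> \<in> D k" using Dtile[OF N Nk dg(1) g0 e1] .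
        ultimately have "b \<in> setplus (D k - U k) (G (Suc k))"
          unfolding setplus_iff using dg(3) by (metis Diff_iff diff_add_cancel)
        then show ?thesis by (simp add: JU_Suc[OF k1])
      qed
    qed
  qed
qed

lemma TileJU:
  assumes "1 \<le> N" "\<gamma>0 \<in> G N" "a - \<gamma>0 \<in> D N" "b - \<gamma>0 \<in> D N" "a \<notin> U N" "b \<notin> U N"
  shows "a \<in> U k \<longleftrightarrow> b \<in> U k"
  using TileJU1[OF assms(1), of k] assms(2-) by blast

lemma TileEta:
  assumes "1 \<le> N" "\<gamma>0 \<in> G N" "a - \<gamma>0 \<in> D N" "b - \<gamma>0 \<in> D N" "a \<notin> U N" "b \<notin> U N"
  shows "et a = et b"
  by (rule eta_eq) (rule TileJU[OF assms])

lemma exists_gamma':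
  assumes N: "N \<ge> 1"
  shows "\<exists>\<gamma>'. \<gamma>' \<in> G N \<and> \<gamma>' \<in> D (Suc N) \<and> \<gamma>' \<notin> G (Suc N)"
proof -
  obtain j0 :: 'n where True by simp
  define v :: "int^'n" where "v = (\<chi> i. if i = j0 then p j0 N else 0)"
  have vN: "v \<in> G N" by (simp add: v_def Gam_iff)
  obtain \<gamma>' where g: "\<gamma>' \<in> D (Suc N)" "v - \<gamma>' \<in> G (Suc N)" using rep_ex[of "Suc N" v] by auto
  have "v - \<gamma>' \<in> G N" using g(2) Gam_mono1[OF N] by blast
  then have gN: "\<gamma>' \<in> G N" using Gam_diff[OF vN \<open>v - \<gamma>' \<in> G N\<close>] by simp
  have "\<gamma>' \<notin> G (Suc N)"
  proof
    assume "\<gamma>' \<in> G (Suc N)"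
    then have "(v - \<gamma>') + \<gamma>' \<in> G (Suc N)" using Gam_add[OF g(2)] by blast
    then have "\<forall>j. p j (Suc N) dvd (if j = j0 then p j0 N else 0)" by (simp add: v_def Gam_iff)
    then have "p j0 (Suc N) dvd p j0 N" by (metis (full_types))
    moreover have "0 < p j0 N" "p j0 N < p j0 (Suc N)" using p_prop N by auto
    ultimately show False using zdvd_imp_le by fastforce
  qed
  then show ?thesis using gN g(1) by blast
qed

lemma NPC:
  assumes N: "N \<ge> 1" and g: "g \<notin> U N"
  shows "(\<exists>\<gamma>1\<in>G N. g + \<gamma>1 \<in> D N \<and> g + \<gamma>1 \<notin> U N)
       \<and> (\<exists>\<gamma>2\<in>G N. g + \<gamma>2 \<in> D (Suc N) \<and> g + \<gamma>2 \<notin> U (Suc N))"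
proof -
  obtain d where d: "d \<in> D N" "g - d \<in> G N" using rep_ex[OF N] by blast
  define \<gamma>1 where "\<gamma>1 = d - g"
  have g1: "\<gamma>1 \<in> G N" using Gam_uminus[OF d(2)] by (simp add: \<gamma>1_def)
  have dU: "d \<notin> U N" using JU_per_iff[OF N order_refl g1, of g] g by (simp add: \<gamma>1_def)
  obtain \<gamma>' where gp: "\<gamma>' \<in> G N" "\<gamma>' \<in> D (Suc N)" "\<gamma>' \<notin> G (Suc N)"
    using exists_gamma'[OF N] by blast
  define e where "e = \<gamma>' + d"
  have rec: "D (Suc N) = (\<Union>\<gamma>\<in>D (Suc N) \<inter> G N. (\<lambda>d. \<gamma> + d) ` D N)"
    using D_rec N by (metis Suc_1 Suc_le_mono diff_Suc_1)
  have eD: "e \<in> D (Suc N)" using rec gp d(1) by (auto simp: e_def)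
  have eU: "e \<notin> U N" using JU_per_iff[OF N order_refl gp(1), of d] dU by (simp add: e_def add.commute)
  have "e \<notin> setplus (D N - U N) (G (Suc N))"
  proof
    assume "e \<in> setplus (D N - U N) (G (Suc N))"
    then obtain d'' \<gamma>'' where h: "d'' \<in> D N" "\<gamma>'' \<in> G (Suc N)" "e = d'' + \<gamma>''"
      by (auto simp: setplus_iff)
    have "d'' \<in> D (Suc N)" using h(1) D_mono N by blast
    moreover have "e - d'' \<in> G (Suc N)" using h by simp
    ultimately have "e = d''" using FD_uniq[of "Suc N"] eD by simp
    then have "e \<in> D N" using h by simp
    moreover have "e - d \<in> G N" using gp(1) by (simp add: e_def)
    ultimately have "e = d" using FD_uniq[OF N] d(1) by blast
    then have "\<gamma>' = 0" by (simp add: e_def)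
    then show False using gp(3) by simp
  qed
  then have "e \<notin> U (Suc N)" using eU by (simp add: JU_Suc[OF N])
  moreover have "g + (\<gamma>1 + \<gamma>') = e" by (simp add: e_def \<gamma>1_def)
  moreover have "\<gamma>1 + \<gamma>' \<in> G N" using g1 gp(1) by (rule Gam_add)
  moreover have "g + \<gamma>1 = d" by (simp add: \<gamma>1_def)
  ultimately show ?thesis using g1 d(1) dU eD by metis
qed

lemma NP:
  assumes N: "N \<ge> 1" and g: "g \<notin> U N"
  shows "g \<notin> Per et (G N) \<alpha>"
proof
  assume P: "g \<in> Per et (G N) \<alpha>"
  from NPC[OF N g] obtain \<gamma>1 \<gamma>2 where
    h: "\<gamma>1 \<in> G N" "g + \<gamma>1 \<in> D N" "g + \<gamma>1 \<notin> U N"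
       "\<gamma>2 \<in> G N" "g + \<gamma>2 \<in> D (Suc N)" "g + \<gamma>2 \<notin> U (Suc N)" by blast
  have "et (g + \<gamma>1) = alpha m (Suc N)" using eta_level[OF N h(2,3)] .
  moreover have "et (g + \<gamma>2) = alpha m (Suc (Suc N))" using eta_level[of "Suc N"] h(5,6) by simp
  moreover have "et (g - (- \<gamma>1)) = \<alpha>" "et (g - (- \<gamma>2)) = \<alpha>"
    using P Gam_uminus[OF h(1)] Gam_uminus[OF h(4)] by (auto simp: Per_iff)
  ultimately show False using alpha_neq[OF m2, of N] by simp
qed

lemma JU_Per: "N \<ge> 1 \<Longrightarrow> g \<in> U N \<Longrightarrow> g \<in> Per et (G N) (et g)"
proof -
  assume N: "N \<ge> 1" and g: "g \<in> U N"
  have "et (g - \<gamma>) = et g" if "\<gamma> \<in> G N" for \<gamma>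
    using eta_per[OF N g Gam_uminus[OF that]] by simp
  then show ?thesis by (simp add: Per_iff)
qed

lemma JU_iff_Per: "N \<ge> 1 \<Longrightarrow> (g \<in> U N \<longleftrightarrow> (\<exists>\<alpha>\<in>{1..int m}. g \<in> Per et (G N) \<alpha>))"
proof -
  assume N: "N \<ge> 1"
  have m1: "m \<ge> 1" using m2 by simp
  show ?thesis
  proof
    assume "g \<in> U N"
    then show "\<exists>\<alpha>\<in>{1..int m}. g \<in> Per et (G N) \<alpha>"
      using JU_Per[OF N] eta_range[OF m1] by blast
  next
    assume "\<exists>\<alpha>\<in>{1..int m}. g \<in> Per et (G N) \<alpha>"
    then show "g \<in> U N" using NP[OF N] by blast
  qed
qed

lemma R: assumes N: "N \<ge> 1" shows "g \<in> U N \<longleftrightarrow> (\<forall>\<gamma>\<in>G N. g + \<gamma> \<in> U (Suc N))"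
proof
  assume g: "g \<in> U N"
  show "\<forall>\<gamma>\<in>G N. g + \<gamma> \<in> U (Suc N)"
  proof
    fix \<gamma> assume "\<gamma> \<in> G N"
    then have "g + \<gamma> \<in> U N" using JU_per[OF N _ g] by blast
    then show "g + \<gamma> \<in> U (Suc N)" using JU_mono[of N "Suc N" p D] by auto
  qed
next
  assume H: "\<forall>\<gamma>\<in>G N. g + \<gamma> \<in> U (Suc N)"
  show "g \<in> U N"
  proof (rule ccontr)
    assume "g \<notin> U N"
    then obtain \<gamma>2 where "\<gamma>2 \<in> G N" "g + \<gamma>2 \<notin> U (Suc N)" using NPC[OF N] by blast
    then show False using H by blast
  qed
qed

lemma nonfull: "N \<ge> 1 \<Longrightarrow> \<exists>g. g \<notin> U N"
proof (induction N rule: dec_induct)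
  case base
  obtain j0 :: 'n where True by simp
  define v :: "int^'n" where "v = (\<chi> i. if i = j0 then 1 else 0)"
  have "p j0 1 > 2 * int 1 + 1" using p_prop[rule_format, of 1 j0] by simp
  then have "p j0 1 > 3" by simp
  then have "\<not> p j0 1 dvd 1" using zdvd_imp_le by fastforce
  then have "v \<notin> G 1" by (auto simp: v_def Gam_iff)
  then show ?case using U1 by blast
next
  case (step N)
  then obtain g where "g \<notin> U N" by blast
  then show ?case using NPC[of N g] step by blast
qed

lemma UJ: "N \<ge> 1 \<Longrightarrow> (\<forall>g. g \<in> U N \<longleftrightarrow> g + v \<in> U N) \<Longrightarrow> v \<in> G N"
proof (induction N rule: dec_induct)
  case base
  then have "0 \<in> U 1 \<longleftrightarrow> 0 + v \<in> U 1" by blast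
  then show ?case using U1 by simp
next
  case (step N)
  have N: "N \<ge> 1" using step by simp
  have H: "\<forall>g. g \<in> U N \<longleftrightarrow> g + v \<in> U N"
  proof
    fix g
    have "g + v \<in> U N \<longleftrightarrow> (\<forall>\<gamma>\<in>G N. g + v + \<gamma> \<in> U (Suc N))" by (rule R[OF N])
    also have "\<dots> \<longleftrightarrow> (\<forall>\<gamma>\<in>G N. g + \<gamma> \<in> U (Suc N))"
    proof -
      have "(g + v + \<gamma> \<in> U (Suc N)) = (g + \<gamma> \<in> U (Suc N))" for \<gamma>
      proof -
        have e: "g + v + \<gamma> = (g + \<gamma>) + v" by (simp add: algebra_simps)
        show ?thesis using step(4)[rule_format, of "g + \<gamma>"] unfolding e by simp
      qed
      then show ?thesis by simp
    qed
    also have "\<dots> \<longleftrightarrow> g \<in> U N" by (rule R[OF N, symmetric])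
    finally show "g \<in> U N \<longleftrightarrow> g + v \<in> U N" by simp
  qed
  have vN: "v \<in> G N" using step(3)[OF H] .
  obtain g0 where "g0 \<notin> U N" using nonfull[OF N] by blast
  then obtain \<gamma>1 where a: "\<gamma>1 \<in> G N" "g0 + \<gamma>1 \<in> D N" "g0 + \<gamma>1 \<notin> U N" using NPC[OF N] by blast
  define a' where "a' = g0 + \<gamma>1"
  have "a' \<in> U (Suc N)" using D_sub_JU[OF N] a by (auto simp: a'_def)
  then have "a' + v \<in> U (Suc N)" using step(4) by blast
  moreover have "a' + v \<notin> U N" using JU_per_iff[OF N order_refl vN, of a'] a by (simp add: a'_def)
  ultimately have "a' + v \<in> setplus (D N - U N) (G (Suc N))" by (simp add: JU_Suc[OF N])
  then obtain d \<gamma> where h: "d \<in> D N" "\<gamma> \<in> G (Suc N)" "a' + v = d + \<gamma>" by (auto simp: setplus_iff)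
  have "\<gamma> \<in> G N" using h(2) Gam_mono1[OF N] by blast
  then have "\<gamma> - v \<in> G N" using vN by (rule Gam_diff)
  moreover have "a' - d = \<gamma> - v" using h(3) by (simp add: algebra_simps)
  ultimately have "a' - d \<in> G N" by simp
  then have "a' = d" using FD_uniq[OF N] a h(1) by (simp add: a'_def)
  then have "v = \<gamma>" using h(3) by simp
  then show ?case using h(2) by simp
qed

end


lemma shift_shift: "shift c (shift g x) = shift (g + c) x"
  by (simp add: shift_def algebra_simps)

lemma shift_cont: "continuous_on UNIV (shift c :: (int^'n \<Rightarrow> int) \<Rightarrow> _)"
  unfolding shift_def
  by (intro continuous_on_coordinatewise_then_product) simp

context toep begin

abbreviation "X \<equiv> Xs p D m"

lemma approx:
  assumes y: "y \<in> X" and F: "finite F"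
  shows "\<exists>g. \<forall>w\<in>F. y w = et (w - g)"
proof -
  define T where "T = (\<Inter>w\<in>F. (\<lambda>z::int^'n \<Rightarrow> int. z w) -` {y w})"
  have "open T" unfolding T_def
    by (intro open_INT F ballI open_vimage open_discrete continuous_on_product_coordinates)
  moreover have "y \<in> T" by (simp add: T_def)
  ultimately have "T \<inter> closure (range (\<lambda>g. shift g et)) \<noteq> {}"
    using y by (auto simp: Xs_def)
  then have "T \<inter> range (\<lambda>g. shift g et) \<noteq> {}"
    using open_Int_closure_eq_empty[OF \<open>open T\<close>] by blast
  then obtain g where "shift g et \<in> T" by blast
  then have "\<forall>w\<in>F. y w = et (w - g)" by (auto simp: T_def shift_def)
  then show ?thesis by blast
qed

lemma shift_X: "y \<in> X \<Longrightarrow> shift c y \<in> X"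
proof -
  assume y: "y \<in> X"
  let ?S = "range (\<lambda>g. shift g et)"
  have "shift c ` ?S \<subseteq> ?S" by (auto simp: shift_shift)
  then have "shift c ` ?S \<subseteq> closure ?S"
    using closure_subset by blast
  then have "shift c ` closure ?S \<subseteq> closure ?S"
    by (intro image_closure_subset continuous_on_subset[OF shift_cont]) auto
  then show ?thesis using y by (auto simp: Xs_def)
qed

lemma X_range: "y \<in> X \<Longrightarrow> y h \<in> {1..int m}"
proof -
  assume "y \<in> X"
  from approx[OF this, of "{h}"] obtain g where "y h = et (h - g)" by auto
  then show ?thesis using eta_range[of m] m2 by simp
qed

definition good :: "(int^'n \<Rightarrow> int) \<Rightarrow> nat \<Rightarrow> int^'n \<Rightarrow> bool" where
  "good y N c \<longleftrightarrow> (\<forall>F. finite F \<longrightarrow> (\<exists>g. - g - c \<in> G N \<and> (\<forall>w\<in>F. y w = et (w - g))))"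

lemma good_ex:
  assumes y: "y \<in> X" and N: "N \<ge> 1"
  shows "\<exists>c. good y N c"
proof (rule ccontr)
  assume "\<nexists>c. good y N c"
  then have "\<forall>c. \<exists>F. finite F \<and> (\<forall>g. - g - c \<in> G N \<longrightarrow> \<not> (\<forall>w\<in>F. y w = et (w - g)))"
    by (auto simp: good_def)
  then obtain Fc where Fc: "\<forall>c. finite (Fc c) \<and> (\<forall>g. - g - c \<in> G N \<longrightarrow> \<not> (\<forall>w\<in>Fc c. y w = et (w - g)))"
    by metis
  define F where "F = (\<Union>c\<in>D N. Fc c)"
  have "finite F" unfolding F_def using D_fin[OF N] Fc by blast
  from approx[OF y this] obtain g where g: "\<forall>w\<in>F. y w = et (w - g)" by blast
  obtain c where c: "c \<in> D N" "- g - c \<in> G N" using rep_ex[OF N] by blast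
  have "\<forall>w\<in>Fc c. y w = et (w - g)" using g c(1) by (auto simp: F_def)
  then show False using Fc c(2) by blast
qed

lemma good_Per:
  assumes y: "y \<in> X" and N: "N \<ge> 1" and c: "good y N c"
  shows "g' \<in> Per et (G N) \<alpha> \<longleftrightarrow> g' - c \<in> Per y (G N) \<alpha>"
proof
  assume P: "g' \<in> Per et (G N) \<alpha>"
  show "g' - c \<in> Per y (G N) \<alpha>"
    unfolding Per_iff
  proof
    fix \<gamma> assume \<gamma>: "\<gamma> \<in> G N"
    obtain g where g: "- g - c \<in> G N" "y (g' - c - \<gamma>) = et (g' - c - \<gamma> - g)"
      using c unfolding good_def by (metis finite.emptyI finite_insert insertI1)
    have "\<gamma> - (- g - c) \<in> G N" using \<gamma> g(1) by (rule Gam_diff)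
    then have "et (g' - (\<gamma> - (- g - c))) = \<alpha>" using P by (simp add: Per_iff)
    moreover have "g' - c - \<gamma> - g = g' - (\<gamma> - (- g - c))" by (simp add: algebra_simps)
    then have "et (g' - c - \<gamma> - g) = et (g' - (\<gamma> - (- g - c)))" by (rule arg_cong)
    ultimately show "y (g' - c - \<gamma>) = \<alpha>" using g(2) by simp
  qed
next
  assume P: "g' - c \<in> Per y (G N) \<alpha>"
  show "g' \<in> Per et (G N) \<alpha>"
  proof (rule ccontr)
    assume "g' \<notin> Per et (G N) \<alpha>"
    then obtain \<gamma>0 where \<gamma>0: "\<gamma>0 \<in> G N" "et (g' - \<gamma>0) \<noteq> \<alpha>" by (auto simp: Per_iff)
    define b where "b = g' - \<gamma>0"
    obtain K where K: "K \<ge> N" "\<forall>\<gamma>\<in>G K. et (b + \<gamma>) = et b" using eta_per_gen[OF N] by blast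
    have K1: "K \<ge> 1" using K N by simp
    define F where "F = (\<lambda>\<delta>. g' - c - \<delta>) ` D K"
    have "finite F" unfolding F_def using D_fin[OF K1] by simp
    then obtain g where g: "- g - c \<in> G N" "\<forall>w\<in>F. y w = et (w - g)"
      using c unfolding good_def by blast
    obtain \<delta> where \<delta>: "\<delta> \<in> D K" "(\<gamma>0 - c - g) - \<delta> \<in> G K" using rep_ex[OF K1] by blast
    have GKN: "G K \<subseteq> G N" using Gam_mono[OF N K(1)] .
    have "\<gamma>0 + (- g - c) \<in> G N" using \<gamma>0(1) g(1) by (rule Gam_add)
    then have a1: "\<gamma>0 - c - g \<in> G N" by (simp add: algebra_simps)
    have "(\<gamma>0 - c - g) - ((\<gamma>0 - c - g) - \<delta>) \<in> G N"
      using Gam_diff[OF a1] \<delta>(2) GKN by blast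
    then have \<delta>N: "\<delta> \<in> G N" by simp
    have "y (g' - c - \<delta>) = \<alpha>" using P \<delta>N by (simp add: Per_iff)
    moreover have "y (g' - c - \<delta>) = et (g' - c - \<delta> - g)" using g(2) \<delta>(1) by (auto simp: F_def)
    moreover have "g' - c - \<delta> - g = b + ((\<gamma>0 - c - g) - \<delta>)" by (simp add: b_def algebra_simps)
    moreover have "et (b + ((\<gamma>0 - c - g) - \<delta>)) = et b" using K(2) \<delta>(2) by blast
    ultimately show False using \<gamma>0(2) by (simp add: b_def)
  qed
qed

lemma good_C:
  assumes y: "y \<in> X" and N: "N \<ge> 1" and c: "good y N c"
  shows "shift c y \<in> Cs p D m N"
  unfolding Cs_def
  using shift_X[OF y] good_Per[OF y N c] by (auto simp: Per_shift)

lemma C_ex: "y \<in> X \<Longrightarrow> N \<ge> 1 \<Longrightarrow> \<exists>t. shift t y \<in> Cs p D m N"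
  using good_ex good_C by blast

end


context toep begin

lemma C_Per: "shift t y \<in> Cs p D m N \<Longrightarrow> \<alpha> \<in> {1..int m} \<Longrightarrow>
    (g \<in> Per et (G N) \<alpha> \<longleftrightarrow> g - t \<in> Per y (G N) \<alpha>)"
proof -
  assume C: "shift t y \<in> Cs p D m N" and a: "\<alpha> \<in> {1..int m}"
  then have "Per (shift t y) (G N) \<alpha> = Per et (G N) \<alpha>" unfolding Cs_def by blast
  then show ?thesis using Per_shift[of g t y "G N" \<alpha>] by blast
qed

lemma SOME_C: "y \<in> X \<Longrightarrow> N \<ge> 1 \<Longrightarrow> shift (SOME t. shift t y \<in> Cs p D m N) y \<in> Cs p D m N"
  using C_ex by (rule someI_ex)

lemma Per_Gam_iff: "v \<in> G N \<Longrightarrow> (g + v \<in> Per z (G N) \<alpha> \<longleftrightarrow> g \<in> Per z (G N) \<alpha>)"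
proof
  assume v: "v \<in> G N" and "g + v \<in> Per z (G N) \<alpha>"
  from Per_Gam_shift[OF this(2) Gam_uminus[OF v]] show "g \<in> Per z (G N) \<alpha>" by simp
qed (rule Per_Gam_shift)

lemma fib_Per:
  assumes y: "y \<in> X" and x: "x \<in> X" and e: "piX p D m y = piX p D m x" and N: "N \<ge> 1"
    and \<alpha>: "\<alpha> \<in> {1..int m}"
  shows "g \<in> Per et (G N) \<alpha> \<longleftrightarrow> g - (SOME t. shift t x \<in> Cs p D m N) \<in> Per y (G N) \<alpha>"
proof -
  define tx where "tx = (SOME t. shift t x \<in> Cs p D m N)"
  define ty where "ty = (SOME t. shift t y \<in> Cs p D m N)"
  have Cy: "shift ty y \<in> Cs p D m N" using SOME_C[OF y N] by (simp add: ty_def)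
  have "piX p D m y N = piX p D m x N" using e by simp
  then have "setplus {ty} (G N) = setplus {tx} (G N)" using N by (simp add: piX_def tx_def ty_def)
  moreover have "ty \<in> setplus {ty} (G N)" by (auto simp: setplus_iff intro!: exI[of _ 0])
  ultimately obtain \<delta> where \<delta>: "\<delta> \<in> G N" "ty = tx + \<delta>" by (auto simp: setplus_iff)
  have "g - tx \<in> Per y (G N) \<alpha> \<longleftrightarrow> (g + \<delta>) - ty \<in> Per y (G N) \<alpha>" by (simp add: \<delta>(2))
  also have "\<dots> \<longleftrightarrow> g + \<delta> \<in> Per et (G N) \<alpha>" using C_Per[OF Cy \<alpha>] by simp
  also have "\<dots> \<longleftrightarrow> g \<in> Per et (G N) \<alpha>" using Per_Gam_iff[OF \<delta>(1)] .
  finally show ?thesis by (simp add: tx_def)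
qed

lemma fib_agree:
  assumes y: "y \<in> X" and x: "x \<in> X" and e: "piX p D m y = piX p D m x" and N: "N \<ge> 1"
    and \<alpha>: "\<alpha> \<in> {1..int m}" and h: "h \<in> Per x (G N) \<alpha>"
  shows "y h = x h"
proof -
  let ?t = "SOME t. shift t x \<in> Cs p D m N"
  have "(h + ?t) - ?t \<in> Per x (G N) \<alpha>" using h by simp
  then have "h + ?t \<in> Per et (G N) \<alpha>" using fib_Per[OF x x refl N \<alpha>] by blast
  then have "(h + ?t) - ?t \<in> Per y (G N) \<alpha>" using fib_Per[OF y x e N \<alpha>] by blast
  then have "h \<in> Per y (G N) \<alpha>" by simp
  then have "y (h - 0) = \<alpha>" "x (h - 0) = \<alpha>" using h Gam_0 unfolding Per_iff by blast+
  then show ?thesis by simp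
qed

lemma hole_U:
  assumes x: "x \<in> X" and hole: "\<forall>N\<ge>1. \<forall>\<alpha>\<in>{1..int m}. h \<notin> Per x (G N) \<alpha>" and N: "N \<ge> 1"
  shows "h + (SOME t. shift t x \<in> Cs p D m N) \<notin> U N"
proof
  let ?t = "SOME t. shift t x \<in> Cs p D m N"
  assume "h + ?t \<in> U N"
  then obtain \<alpha> where \<alpha>: "\<alpha> \<in> {1..int m}" "h + ?t \<in> Per et (G N) \<alpha>" using JU_iff_Per[OF N] by blast
  then have "(h + ?t) - ?t \<in> Per x (G N) \<alpha>" using fib_Per[OF x x refl N \<alpha>(1)] by blast
  then show False using hole N \<alpha>(1) by simp
qed

lemma key:
  assumes y: "y \<in> X" and x: "x \<in> X" and e: "piX p D m y = piX p D m x" and N: "N \<ge> 1"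
    and hh: "\<forall>N\<ge>1. \<forall>\<alpha>\<in>{1..int m}. h \<notin> Per x (G N) \<alpha>"
    and hh': "\<forall>N\<ge>1. \<forall>\<alpha>\<in>{1..int m}. h' \<notin> Per x (G N) \<alpha>"
    and \<gamma>0: "\<gamma>0 \<in> G N"
    and t1: "h + (SOME t. shift t x \<in> Cs p D m N) - \<gamma>0 \<in> D N"
    and t2: "h' + (SOME t. shift t x \<in> Cs p D m N) - \<gamma>0 \<in> D N"
  shows "y h = y h'"
proof -
  define t where "t = (SOME t. shift t x \<in> Cs p D m N)"
  obtain c where c: "good y N c" using good_ex[OF y N] by blast
  define v where "v = t - c"
  have "\<forall>g. g \<in> U N \<longleftrightarrow> g + v \<in> U N"
  proof
    fix g
    have "g \<in> U N \<longleftrightarrow> (\<exists>\<alpha>\<in>{1..int m}. g \<in> Per et (G N) \<alpha>)" by (rule JU_iff_Per[OF N])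
    also have "\<dots> \<longleftrightarrow> (\<exists>\<alpha>\<in>{1..int m}. g - c \<in> Per y (G N) \<alpha>)"
      using good_Per[OF y N c] by blast
    also have "\<dots> \<longleftrightarrow> (\<exists>\<alpha>\<in>{1..int m}. (g + v) - t \<in> Per y (G N) \<alpha>)"
      by (simp add: v_def)
    also have "\<dots> \<longleftrightarrow> (\<exists>\<alpha>\<in>{1..int m}. g + v \<in> Per et (G N) \<alpha>)"
      using fib_Per[OF y x e N] unfolding t_def by blast
    also have "\<dots> \<longleftrightarrow> g + v \<in> U N" by (rule JU_iff_Per[OF N, symmetric])
    finally show "g \<in> U N \<longleftrightarrow> g + v \<in> U N" .
  qed
  then have vN: "v \<in> G N" using UJ[OF N] by blast
  obtain g where g: "- g - c \<in> G N" "\<forall>w\<in>{h, h'}. y w = et (w - g)"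
    using c unfolding good_def by (meson finite.emptyI finite_insert)
  define \<delta> where "\<delta> = - g - t"
  have \<delta>N: "\<delta> \<in> G N" using Gam_diff[OF g(1) vN] by (simp add: \<delta>_def v_def)
  have a: "h - g = (h + t) + \<delta>" "h' - g = (h' + t) + \<delta>" by (simp_all add: \<delta>_def)
  have nU: "h + t \<notin> U N" "h' + t \<notin> U N"
    using hole_U[OF x hh N] hole_U[OF x hh' N] by (simp_all add: t_def)
  have "et (h - g) = et (h' - g)"
  proof (rule TileEta[OF N Gam_add[OF \<gamma>0 \<delta>N]])
    show "h - g - (\<gamma>0 + \<delta>) \<in> D N" "h' - g - (\<gamma>0 + \<delta>) \<in> D N"
      using t1 t2 by (simp_all add: a t_def algebra_simps)
    show "h - g \<notin> U N" "h' - g \<notin> U N"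
      unfolding a using JU_per_iff[OF N order_refl \<delta>N] nU by simp_all
  qed
  then show ?thesis using g(2) by simp
qed

end


context toep begin

lemma div_step: "(P::int) > 0 \<Longrightarrow> B < A + P \<Longrightarrow> B div P \<le> A div P + 1"
proof -
  assume P: "P > 0" and "B < A + P"
  then have "B div P \<le> (A + P) div P" by (intro zdiv_mono1) auto
  also have "(A + P) div P = A div P + 1" using P by simp
  finally show ?thesis .
qed

lemma tile_pigeon:
  assumes N: "N \<ge> 1" and S: "finite S" "card S > 2 ^ CARD('n)"
    and sp: "\<forall>h\<in>S. \<forall>h'\<in>S. \<forall>j. \<bar>h $ j - h' $ j\<bar> < int N"
  shows "\<exists>h\<in>S. \<exists>h'\<in>S. h \<noteq> h' \<and> (\<exists>\<gamma>0\<in>G N. h + t - \<gamma>0 \<in> D N \<and> h' + t - \<gamma>0 \<in> D N)"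
proof -
  obtain q1 q2 :: "'n \<Rightarrow> int" where q: "\<forall>j. q1 j > int N \<and> q2 j > int N \<and> q1 j + q2 j = p j N"
    and DN: "D N = {v. \<forall>j. - q1 j \<le> v $ j \<and> v $ j < q2 j}"
    using D_box N by blast
  have PN: "p j N > int N" for j
  proof -
    have "int N < q1 j" "int N < q2 j" "q1 j + q2 j = p j N" using q by auto
    then show ?thesis by linarith
  qed
  define key where "key h = (\<lambda>j. (h $ j + t $ j + q1 j) div p j N)" for h :: "int^'n"
  have Sne: "S \<noteq> {}" using S by auto
  define M where "M j = Min ((\<lambda>h. key h j) ` S)" for j
  have inP: "key h \<in> PiE UNIV (\<lambda>j. {M j, M j + 1})" if h: "h \<in> S" for h
  proof -
    have "key h j \<in> {M j, M j + 1}" for j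
    proof -
      have fin: "finite ((\<lambda>h. key h j) ` S)" using S by simp
      have ge: "M j \<le> key h j" unfolding M_def using fin h by simp
      have "M j \<in> (\<lambda>h. key h j) ` S" unfolding M_def using fin Sne by (intro Min_in) auto
      then obtain hm where hm: "hm \<in> S" "key hm j = M j" by auto
      have "\<bar>h $ j - hm $ j\<bar> < int N" using sp h hm by blast
      then have "h $ j + t $ j + q1 j < (hm $ j + t $ j + q1 j) + p j N" using PN[of j] by linarith
      then have "key h j \<le> key hm j + 1" unfolding key_def
        using div_step[of "p j N"] PN[of j] by simp
      then show ?thesis using ge hm(2) by auto
    qed
    then show ?thesis by (auto simp: PiE_def extensional_def)
  qed
  have "card (PiE (UNIV::'n set) (\<lambda>j. {M j, M j + 1})) = (\<Prod>j\<in>(UNIV::'n set). card {M j, M j + 1})"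
    by (rule card_PiE) simp
  also have "\<dots> = (\<Prod>j\<in>(UNIV::'n set). 2)"
  proof -
    have c2: "card {M j, M j + 1} = 2" for j by (simp add: numeral_2_eq_2)
    show ?thesis by (simp only: c2)
  qed
  also have "\<dots> = 2 ^ CARD('n)" by simp
  finally have cP: "card (PiE (UNIV::'n set) (\<lambda>j. {M j, M j + 1})) = 2 ^ CARD('n)" .
  have "key ` S \<subseteq> PiE UNIV (\<lambda>j. {M j, M j + 1})" using inP by blast
  moreover have "finite (PiE (UNIV::'n set) (\<lambda>j. {M j, M j + 1}))" by (rule finite_PiE) auto
  ultimately have "card (key ` S) \<le> 2 ^ CARD('n)" using cP card_mono by metis
  then have "\<not> inj_on key S" using S card_image by fastforce
  then obtain h h' where hh: "h \<in> S" "h' \<in> S" "h \<noteq> h'" "key h = key h'"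
    unfolding inj_on_def by blast
  define \<gamma>0 :: "int^'n" where "\<gamma>0 = (\<chi> j. p j N * key h j)"
  have g0: "\<gamma>0 \<in> G N" by (simp add: \<gamma>0_def Gam_iff)
  have inD: "z + t - \<gamma>0 \<in> D N" if "key z = key h" for z
  proof -
    have "- q1 j \<le> (z + t - \<gamma>0) $ j \<and> (z + t - \<gamma>0) $ j < q2 j" for j
    proof -
      define w where "w = z $ j + t $ j + q1 j"
      have kz: "key h j = w div p j N" using fun_cong[OF that, of j] by (simp add: key_def w_def)
      have "w = p j N * (w div p j N) + w mod p j N" by simp
      moreover have "0 \<le> w mod p j N" "w mod p j N < p j N" using PN[of j] by simp_all
      moreover have "(z + t - \<gamma>0) $ j = z $ j + t $ j - p j N * key h j" by (simp add: \<gamma>0_def)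
      ultimately show ?thesis using q kz unfolding w_def by (smt (verit))
    qed
    then show ?thesis by (simp add: DN)
  qed
  show ?thesis using hh g0 inD[of h] inD[of h'] by metis
qed

end


context toep begin

lemma main:
  assumes x: "x \<in> X"
  shows "finite {y \<in> X. piX p D m y = piX p D m x}
       \<and> card {y \<in> X. piX p D m y = piX p D m x} \<le> m ^ (2 ^ CARD('n))"
proof -
  define Fib where "Fib = {y \<in> X. piX p D m y = piX p D m x}"
  define H where "H = {h. \<forall>N\<ge>1. \<forall>\<alpha>\<in>{1..int m}. h \<notin> Per x (G N) \<alpha>}"
  define Q where "Q S \<longleftrightarrow> S \<subseteq> H \<and> finite S \<and> (\<forall>h\<in>S. \<forall>h'\<in>S. h \<noteq> h' \<longrightarrow> \<not> (\<forall>y\<in>Fib. y h = y h'))"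
    for S
  have bound: "card S < 2 ^ CARD('n) + 1" if QS: "Q S" for S
  proof (rule ccontr)
    assume "\<not> card S < 2 ^ CARD('n) + 1"
    then have cS: "card S > 2 ^ CARD('n)" by simp
    have fin: "finite S" using QS by (simp add: Q_def)
    define sp where "sp = Max ((\<lambda>(h, h', j). \<bar>h $ j - h' $ j\<bar>) ` (S \<times> S \<times> (UNIV::'n set)))"
    define N where "N = nat sp + 1"
    have N1: "N \<ge> 1" by (simp add: N_def)
    have spb: "\<forall>h\<in>S. \<forall>h'\<in>S. \<forall>j. \<bar>h $ j - h' $ j\<bar> < int N"
    proof (intro ballI allI)
      fix h h' j assume "h \<in> S" "h' \<in> S"
      then have "(h, h', j) \<in> S \<times> S \<times> (UNIV::'n set)" by simp
      then have "(\<lambda>(h, h', j). \<bar>h $ j - h' $ j\<bar>) (h, h', j)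
          \<in> (\<lambda>(h, h', j). \<bar>h $ j - h' $ j\<bar>) ` (S \<times> S \<times> (UNIV::'n set))"
        by (rule imageI)
      then have "\<bar>h $ j - h' $ j\<bar> \<le> sp" unfolding sp_def
        by (intro Max_ge) (use fin in auto)
      moreover have "sp < int N" by (simp add: N_def)
      ultimately show "\<bar>h $ j - h' $ j\<bar> < int N" by linarith
    qed
    obtain h h' \<gamma>0 where hh: "h \<in> S" "h' \<in> S" "h \<noteq> h'" "\<gamma>0 \<in> G N"
      "h + (SOME t. shift t x \<in> Cs p D m N) - \<gamma>0 \<in> D N"
      "h' + (SOME t. shift t x \<in> Cs p D m N) - \<gamma>0 \<in> D N"
      using tile_pigeon[OF N1 fin cS spb, of "SOME t. shift t x \<in> Cs p D m N"] by blast
    have hH: "h \<in> H" "h' \<in> H" using QS hh(1,2) by (auto simp: Q_def)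
    have "\<forall>y\<in>Fib. y h = y h'"
    proof
      fix y assume "y \<in> Fib"
      then have y: "y \<in> X" "piX p D m y = piX p D m x" by (auto simp: Fib_def)
      show "y h = y h'"
        by (rule key[OF y(1) x y(2) N1 _ _ hh(4) hh(5) hh(6)]) (use hH in \<open>auto simp: H_def\<close>)
    qed
    moreover have "\<not> (\<forall>y\<in>Fib. y h = y h')" using QS hh(1-3) unfolding Q_def by blast
    ultimately show False by blast
  qed
  have Q0: "Q {}" by (simp add: Q_def)
  obtain S0 where S0: "Q S0" "\<forall>S. Q S \<longrightarrow> card S \<le> card S0"
    using ex_has_greatest_nat[of Q "{}" card "2 ^ CARD('n) + 1"] Q0 bound by blast
  have finS0: "finite S0" using S0(1) by (simp add: Q_def)
  have cover: "\<exists>s\<in>S0. \<forall>y\<in>Fib. y h = y s" if hH: "h \<in> H" for h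
  proof (rule ccontr)
    assume nc: "\<not> (\<exists>s\<in>S0. \<forall>y\<in>Fib. y h = y s)"
    then have hS: "h \<notin> S0" by blast
    have "Q (insert h S0)"
      unfolding Q_def
    proof (intro conjI)
      show "insert h S0 \<subseteq> H" using hH S0(1) by (auto simp: Q_def)
      show "finite (insert h S0)" using finS0 by simp
      show "\<forall>a\<in>insert h S0. \<forall>b\<in>insert h S0. a \<noteq> b \<longrightarrow> \<not> (\<forall>y\<in>Fib. y a = y b)"
        using S0(1) nc unfolding Q_def by (metis insert_iff)
    qed
    then have "card (insert h S0) \<le> card S0" using S0(2) by blast
    then show False using hS finS0 by simp
  qed
  define \<Phi> where "\<Phi> y = restrict y S0" for y :: "int^'n \<Rightarrow> int"
  have inj: "inj_on \<Phi> Fib"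
  proof (rule inj_onI)
    fix y y' assume yF: "y \<in> Fib" "y' \<in> Fib" and e: "\<Phi> y = \<Phi> y'"
    have eS: "y s = y' s" if "s \<in> S0" for s
      using fun_cong[OF e, of s] that by (simp add: \<Phi>_def)
    show "y = y'"
    proof
      fix h
      show "y h = y' h"
      proof (cases "h \<in> H")
        case True
        then obtain s where "s \<in> S0" "\<forall>y\<in>Fib. y h = y s" using cover by blast
        then show ?thesis using eS yF by metis
      next
        case False
        then obtain N \<alpha> where N\<alpha>: "N \<ge> 1" "\<alpha> \<in> {1..int m}" "h \<in> Per x (G N) \<alpha>"
          by (auto simp: H_def)
        have "y h = x h" using yF(1) fib_agree[OF _ x _ N\<alpha>] by (auto simp: Fib_def)
        moreover have "y' h = x h" using yF(2) fib_agree[OF _ x _ N\<alpha>] by (auto simp: Fib_def)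
        ultimately show ?thesis by simp
      qed
    qed
  qed
  have img: "\<Phi> ` Fib \<subseteq> PiE S0 (\<lambda>_. {1..int m})"
    using X_range by (auto simp: \<Phi>_def Fib_def)
  have finP: "finite (PiE S0 (\<lambda>_. {1..int m}))" using finS0 by (intro finite_PiE) auto
  have "card (PiE S0 (\<lambda>_. {1..int m})) = (\<Prod>s\<in>S0. card {1..int m})"
    using finS0 by (rule card_PiE)
  also have "\<dots> = m ^ card S0" by simp
  finally have cardP: "card (PiE S0 (\<lambda>_. {1..int m})) = m ^ card S0" .
  have finF: "finite Fib"
    using finite_imageD[OF finite_subset[OF img finP] inj] .
  have "card Fib = card (\<Phi> ` Fib)" using card_image[OF inj] by simp
  also have "\<dots> \<le> m ^ card S0" using card_mono[OF finP img] cardP by simp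
  also have "\<dots> \<le> m ^ (2 ^ CARD('n))"
    using bound[OF S0(1)] m2 by (intro power_increasing) auto
  finally show ?thesis using finF by (simp add: Fib_def)
qed

end

theorem proposition4p8:
  fixes p :: "'n::finite \<Rightarrow> nat \<Rightarrow> int" and D :: "nat \<Rightarrow> (int^'n) set"
    and m :: nat and x :: "int^'n \<Rightarrow> int"
  assumes r2: "CARD('n) \<ge> 2"
    and p_prop: "\<forall>j i. i \<ge> 1 \<longrightarrow> 0 < p j i \<and> p j i < p j (Suc i) \<and> p j i dvd p j (Suc i)
                   \<and> p j i > 2 * int i + 1"
    and index: "\<forall>i\<ge>1. real (subgroup_index (Gam p i) (Gam p (Suc i)))
                   > 1 / (1 - 2 powr (- ((1/2) ^ (Suc i))))"
    and D_box: "\<forall>i\<ge>1. \<exists>q1 q2 :: 'n \<Rightarrow> int. (\<forall>j. q1 j > int i \<and> q2 j > int i \<and> q1 j + q2 j = p j i)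
                   \<and> D i = {v. \<forall>j. - q1 j \<le> v $ j \<and> v $ j < q2 j}"
    and D_fund: "\<forall>i\<ge>1. \<forall>g. \<exists>!d. d \<in> D i \<and> g - d \<in> Gam p i"
    and D_mono: "\<forall>i\<ge>1. 0 \<in> D i \<and> D i \<subseteq> D (Suc i)"
    and D_union: "(\<Union>i\<in>{1..}. D i) = UNIV"
    and D_rec: "\<forall>i\<ge>2. D i = (\<Union>\<gamma>\<in>D i \<inter> Gam p (i - 1). (\<lambda>d. \<gamma> + d) ` D (i - 1))"
    and m2: "m \<ge> 2"
    and xX: "x \<in> Xs p D m"
  shows "finite {y \<in> Xs p D m. piX p D m y = piX p D m x}
       \<and> card {y \<in> Xs p D m. piX p D m y = piX p D m x} \<le> m ^ (2 ^ CARD('n))"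
proof -
  interpret toep p D m
    using p_prop D_box D_fund D_mono D_union D_rec m2 by unfold_locales
  show ?thesis using main[OF xX] .
qed


end
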